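(* For every term $t\in T( *,\circ,x)$ there exists a positive integer $p$ such that $x^{[n]}\equiv_{\mathtt{ALD}} t*x^{[n-p]}$ holds for all sufficiently large $n$.
   Context: $T( *,\circ,x)$ is the set of terms built from a single variable $x$ using two binary operation symbols $*$ and $\circ$. Right vines: $x^{[1]}=x$ and $x^{[n]}=x*x^{[n-1]}$ for $n\ge2$. $\equiv_{\mathtt{ALD}}$ is the congruence on terms generated by the three laws $x*(y*z)=(x*y)*(x*z)$, $x*(y\circ z)=(x*y)\circ(x*z)$, $x*(y*z)=(x\circ y)*z$ (i.e. equality modulo these identities). *)

theory Defs
  imports Main
begin

datatype trm = X | Star trm trm | Circ trm trm

text \<open>Right vines: x^[1] = x, x^[n] = x * x^[n-1]. (x^[0] is set to x as a dummy value.)\<close>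
fun rvine :: "nat \<Rightarrow> trm" where
  "rvine 0 = X"
| "rvine (Suc 0) = X"
| "rvine (Suc (Suc n)) = Star X (rvine (Suc n))"

inductive ald_eq :: "trm \<Rightarrow> trm \<Rightarrow> bool" where
  ld:   "ald_eq (Star a (Star b c)) (Star (Star a b) (Star a c))"
| ldc:  "ald_eq (Star a (Circ b c)) (Circ (Star a b) (Star a c))"
| circ: "ald_eq (Star a (Star b c)) (Star (Circ a b) c)"
| refl: "ald_eq a a"
| sym:  "ald_eq a b \<Longrightarrow> ald_eq b a"
| trans: "ald_eq a b \<Longrightarrow> ald_eq b c \<Longrightarrow> ald_eq a c"
| cong_star: "ald_eq a a' \<Longrightarrow> ald_eq b b' \<Longrightarrow> ald_eq (Star a b) (Star a' b')"
| cong_circ: "ald_eq a a' \<Longrightarrow> ald_eq b b' \<Longrightarrow> ald_eq (Circ a b) (Circ a' b')"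

end

theory Submission
  imports Defs
begin

lemma rvine_step: "n \<ge> 2 \<Longrightarrow> rvine n = Star X (rvine (n - 1))"
  by (cases n rule: rvine.cases) auto

lemma main: "\<exists>p::nat. p > 0 \<and> (\<exists>N. \<forall>n\<ge>N. ald_eq (rvine n) (Star t (rvine (n - p))))"
proof (induction t)
  case X
  have "\<forall>n\<ge>2. ald_eq (rvine n) (Star X (rvine (n - 1)))"
    using rvine_step ald_eq.refl by simp
  then show ?case by blast
next
  case (Star t1 t2)
  from Star.IH(1) obtain p1 N1 where p1: "p1 > 0" and h1: "\<And>n. n \<ge> N1 \<Longrightarrow> ald_eq (rvine n) (Star t1 (rvine (n - p1)))" by blast
  from Star.IH(2) obtain p2 N2 where p2: "p2 > 0" and h2: "\<And>n. n \<ge> N2 \<Longrightarrow> ald_eq (rvine n) (Star t2 (rvine (n - p2)))" by blast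
  have "\<forall>n\<ge>N1 + N2 + p1 + p2. ald_eq (rvine n) (Star (Star t1 t2) (rvine (n - p2)))"
  proof (intro allI impI)
    fix n assume n: "n \<ge> N1 + N2 + p1 + p2"
    define m where "m = n - p1 - p2"
    have a: "ald_eq (rvine n) (Star t1 (rvine (n - p1)))" using h1 n by simp
    have b: "ald_eq (rvine (n - p1)) (Star t2 (rvine m))" using h2[of "n - p1"] n unfolding m_def by simp
    have c: "ald_eq (rvine (n - p2)) (Star t1 (rvine m))"
    proof -
      have e: "n - p2 - p1 = m" unfolding m_def by simp
      have "N1 \<le> n - p2" using n by simp
      then show ?thesis using h1[of "n - p2"] e by simp
    qed
    have "ald_eq (rvine n) (Star t1 (Star t2 (rvine m)))"
      using a b ald_eq.trans ald_eq.cong_star ald_eq.refl by blast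
    moreover have "ald_eq (Star t1 (Star t2 (rvine m))) (Star (Star t1 t2) (Star t1 (rvine m)))"
      by (rule ald_eq.ld)
    moreover have "ald_eq (Star (Star t1 t2) (Star t1 (rvine m))) (Star (Star t1 t2) (rvine (n - p2)))"
      using c ald_eq.sym ald_eq.cong_star ald_eq.refl by blast
    ultimately show "ald_eq (rvine n) (Star (Star t1 t2) (rvine (n - p2)))"
      using ald_eq.trans by blast
  qed
  then show ?case using p2 by blast
next
  case (Circ t1 t2)
  from Circ.IH(1) obtain p1 N1 where p1: "p1 > 0" and h1: "\<And>n. n \<ge> N1 \<Longrightarrow> ald_eq (rvine n) (Star t1 (rvine (n - p1)))" by blast
  from Circ.IH(2) obtain p2 N2 where p2: "p2 > 0" and h2: "\<And>n. n \<ge> N2 \<Longrightarrow> ald_eq (rvine n) (Star t2 (rvine (n - p2)))" by blast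
  have "\<forall>n\<ge>N1 + N2 + p1. ald_eq (rvine n) (Star (Circ t1 t2) (rvine (n - (p1 + p2))))"
  proof (intro allI impI)
    fix n assume n: "n \<ge> N1 + N2 + p1"
    have a: "ald_eq (rvine n) (Star t1 (rvine (n - p1)))" using h1 n by simp
    have b: "ald_eq (rvine (n - p1)) (Star t2 (rvine (n - (p1 + p2))))" using h2[of "n - p1"] n by simp
    have "ald_eq (rvine n) (Star t1 (Star t2 (rvine (n - (p1 + p2)))))"
      using a b ald_eq.trans ald_eq.cong_star ald_eq.refl by blast
    then show "ald_eq (rvine n) (Star (Circ t1 t2) (rvine (n - (p1 + p2))))"
      using ald_eq.circ ald_eq.trans by blast
  qed
  then show ?case using p1 p2 by (metis add_pos_pos)
qed

theorem lemma3p3: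
  shows "\<forall>t. \<exists>p::nat. p > 0 \<and> (\<exists>N. N > p \<and>
           (\<forall>n\<ge>N. ald_eq (rvine n) (Star t (rvine (n - p)))))"
proof
  fix t
  from main[of t] obtain p N where p: "p > 0" and h: "\<forall>n\<ge>N. ald_eq (rvine n) (Star t (rvine (n - p)))" by blast
  have "N + p + 1 > p" by simp
  moreover have "\<forall>n\<ge>N + p + 1. ald_eq (rvine n) (Star t (rvine (n - p)))" using h by simp
  ultimately show "\<exists>p::nat. p > 0 \<and> (\<exists>N. N > p \<and>
           (\<forall>n\<ge>N. ald_eq (rvine n) (Star t (rvine (n - p)))))" using p by blast
qed

end
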